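(* Under the assumptions and notation of the context, let $(\mathbf x_N,\mathbf m_N,\mathbf p_N,\mathbf y_N)$ be the unique solution of the system (AV$_N$) and $(\mathbf m,\mathbf p,\mathbf y)$ the unique solution of (MF). Then there is a constant $C$ independent of $N$ and of the initial states such that $\sup_{0\le t\le T}\big(|\mathbf x_N(t)-\mathbf m(t)|+|\mathbf m_N(t)-\mathbf m(t)|+|\mathbf p_N(t)-\mathbf p(t)|+|\mathbf y_N(t)-\mathbf y(t)|\big)\le C|x^{(N)}(0)-m_0|$, where $x^{(N)}(0)=\frac1N\sum_{i=1}^Nx_i(0)$.
   Context: Fix integers $n,n_1\ge1$, $T>0$, constant matrices $A,G,\Gamma\in\mathbb R^{n\times n}$, $B\in\mathbb R^{n\times n_1}$, $\eta,m_0\in\mathbb R^n$, $\gamma>0$, symmetric $Q\ge0$, $H\ge0$ ($n\times n$), $R>0$ ($n_1\times n_1$); $x_1(0),\dots,x_N(0)\in\mathbb R^n$ deterministic. Write $\widehat Q=(I-\Gamma)^TQ(I-\Gamma)$, $|z|_M^2=z^TMz$, $\|h\|_{L^2}=(\int_0^T|h|^2dt)^{1/2}$. Assume (H1): with $\dot z=(A+G)z+g$, $z(0)=0$, $\bar J''(g)=\int_0^T\{-z^T\widehat Qz+\frac1\gamma|g|^2\}dt-z(T)^THz(T)$, there is $\epsilon_0>0$ with $\bar J''(g)\ge\epsilon_0\|g\|_{L^2}^2$ for all $g$; and (H2): for $\nu\in L^2(0,T;\mathbb R^{n_1})$ let $(z_i,z,q)$ solve $\dot z_i=Az_i+B\nu+Gz+\gamma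 q$, $\dot z=(A+G)z+\gamma q$, $\dot q=-(A+G)^Tq-(I-\Gamma)^TQ(z_i-\Gamma z)$, $z_i(0)=z(0)=0$, $q(T)=Hz_i(T)$, $\bar J^a(\nu)=\int_0^T\{|z_i-\Gamma z|_Q^2+\nu^TR\nu-\gamma|q|^2\}dt+|z_i(T)|_H^2$, and there is $\delta_0>0$ with $\bar J^a(\nu)\ge\delta_0\|\nu\|_{L^2}^2$ for all $\nu$. Assume (MF): $\dot{\mathbf m}=(A+G)\mathbf m+BR^{-1}B^T\mathbf y+\gamma\mathbf p$, $\dot{\mathbf p}=-(A+G)^T\mathbf p-(I-\Gamma)^TQ[\mathbf m-(\Gamma\mathbf m+\eta)]$, $\dot{\mathbf y}=-A^T\mathbf y+Q[\mathbf m-(\Gamma\mathbf m+\eta)]$, $\mathbf m(0)=m_0$, $\mathbf p(T)=H\mathbf m(T)$, $\mathbf y(T)=-H\mathbf m(T)$, has a unique solution, and set $\bar u^*=R^{-1}B^T\mathbf y$. (AV$_N$): $\dot{\mathbf x}_N=A\mathbf x_N+BR^{-1}B^T\mathbf y_N+G\mathbf m_N+\gamma\mathbf p_N$, $\dot{\mathbf m}_N=(A+G)\mathbf m_N+B\bar u^*+\gamma\mathbf p_N$, $\dot{\mathbf p}_N=-(A+G)^T\mathbf p_N-(I-\Gamma)^TQ[\mathbf x_N-(\Gamma\mathbf m_N+\eta)]$, $\dot{\mathbf y}_N=-A^T\mathbf y_N+Q[\mathbf x_N-(\Gamma\mathbf m_N+\eta)]$, with $\mathbf x_N(0)=\frac1N\sum_{i=1}^Nx_i(0)$,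 $\mathbf m_N(0)=m_0$, $\mathbf p_N(T)=H\mathbf x_N(T)$, $\mathbf y_N(T)=-H\mathbf x_N(T)$ (uniquely solvable under these assumptions). *)

theory Defs
  imports "HOL-Analysis.Analysis"
begin

definition L2_on :: "real \<Rightarrow> (real \<Rightarrow> 'a::euclidean_space) \<Rightarrow> bool" where
  "L2_on T g \<longleftrightarrow> set_integrable lborel {0..T} g
     \<and> set_integrable lborel {0..T} (\<lambda>t. (norm (g t))\<^sup>2)"

definition L2_norm_sq :: "real \<Rightarrow> (real \<Rightarrow> 'a::euclidean_space) \<Rightarrow> real" where
  "L2_norm_sq T g = set_lebesgue_integral lborel {0..T} (\<lambda>t. (norm (g t))\<^sup>2)"

definition qf :: "real^'n^'n \<Rightarrow> real^'n \<Rightarrow> real" where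
  "qf M z = z \<bullet> (M *v z)"

definition psd :: "real^'n^'n \<Rightarrow> bool" where
  "psd M \<longleftrightarrow> transpose M = M \<and> (\<forall>z. qf M z \<ge> 0)"

definition pd :: "real^'n^'n \<Rightarrow> bool" where
  "pd M \<longleftrightarrow> transpose M = M \<and> (\<forall>z. z \<noteq> 0 \<longrightarrow> qf M z > 0)"

definition Qhat :: "real^'n^'n \<Rightarrow> real^'n^'n \<Rightarrow> real^'n^'n" where
  "Qhat Q \<Gamma> = transpose (mat 1 - \<Gamma>) ** Q ** (mat 1 - \<Gamma>)"

text \<open>Assumption (H1). Solutions of the ODE with L^2 input are understood in the
  integral (Caratheodory) sense: continuous z with
  z(t) = int_0^t ((A+G) z + g).\<close>
definition H1 :: "real \<Rightarrow> real \<Rightarrow> real^'n^'n \<Rightarrow> real^'n^'n \<Rightarrow> real^'n^'n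
                  \<Rightarrow> real^'n^'n \<Rightarrow> real^'n^'n \<Rightarrow> bool" where
  "H1 T \<gamma> A G \<Gamma> Q H \<longleftrightarrow>
    (\<exists>\<epsilon>0>0. \<forall>(g::real \<Rightarrow> real^'n) z.
       L2_on T g \<and> continuous_on {0..T} z \<and>
       (\<forall>t\<in>{0..T}. z t = set_lebesgue_integral lborel {0..t} (\<lambda>s. (A + G) *v z s + g s))
       \<longrightarrow> set_lebesgue_integral lborel {0..T}
              (\<lambda>t. - qf (Qhat Q \<Gamma>) (z t) + (1 / \<gamma>) * (norm (g t))\<^sup>2)
            - qf H (z T) \<ge> \<epsilon>0 * L2_norm_sq T g)"

text \<open>Assumption (H2), again in integral form; the terminal condition
  q(T) = H z_i(T) together with q' = -(A+G)^T q - (I-Gamma)^T Q (z_i - Gamma z) gives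
  q(t) = H z_i(T) + int_t^T ((A+G)^T q + (I-Gamma)^T Q (z_i - Gamma z)).\<close>
definition H2 :: "real \<Rightarrow> real \<Rightarrow> real^'n^'n \<Rightarrow> real^'k^'n \<Rightarrow> real^'n^'n \<Rightarrow> real^'n^'n
                  \<Rightarrow> real^'n^'n \<Rightarrow> real^'n^'n \<Rightarrow> real^'k^'k \<Rightarrow> bool" where
  "H2 T \<gamma> A B G \<Gamma> Q H R \<longleftrightarrow>
    (\<exists>\<delta>0>0. \<forall>(\<nu>::real \<Rightarrow> real^'k) zi z q.
       L2_on T \<nu> \<and> continuous_on {0..T} zi \<and> continuous_on {0..T} z \<and> continuous_on {0..T} q \<and>
       (\<forall>t\<in>{0..T}. zi t = set_lebesgue_integral lborel {0..t}
           (\<lambda>s. A *v zi s + B *v \<nu> s + G *v z s + \<gamma> *\<^sub>R q s)) \<and>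
       (\<forall>t\<in>{0..T}. z t = set_lebesgue_integral lborel {0..t}
           (\<lambda>s. (A + G) *v z s + \<gamma> *\<^sub>R q s)) \<and>
       (\<forall>t\<in>{0..T}. q t = H *v zi T + set_lebesgue_integral lborel {t..T}
           (\<lambda>s. transpose (A + G) *v q s + (transpose (mat 1 - \<Gamma>) ** Q) *v (zi s - \<Gamma> *v z s)))
       \<longrightarrow> set_lebesgue_integral lborel {0..T}
              (\<lambda>t. qf Q (zi t - \<Gamma> *v z t) + qf R (\<nu> t) - \<gamma> * (norm (q t))\<^sup>2)
            + qf H (zi T) \<ge> \<delta>0 * L2_norm_sq T \<nu>)"

definition MF_sol :: "real \<Rightarrow> real \<Rightarrow> real^'n^'n \<Rightarrow> real^'k^'n \<Rightarrow> real^'n^'n \<Rightarrow> real^'n^'n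
                  \<Rightarrow> real^'n^'n \<Rightarrow> real^'n^'n \<Rightarrow> real^'k^'k \<Rightarrow> real^'n \<Rightarrow> real^'n
                  \<Rightarrow> (real \<Rightarrow> real^'n) \<Rightarrow> (real \<Rightarrow> real^'n) \<Rightarrow> (real \<Rightarrow> real^'n) \<Rightarrow> bool" where
  "MF_sol T \<gamma> A B G \<Gamma> Q H R \<eta> m0 m p y \<longleftrightarrow>
    (\<forall>t\<in>{0..T}.
       (m has_vector_derivative
          ((A + G) *v m t + (B ** matrix_inv R ** transpose B) *v y t + \<gamma> *\<^sub>R p t)) (at t within {0..T})
     \<and> (p has_vector_derivative
          (- (transpose (A + G) *v p t) - (transpose (mat 1 - \<Gamma>) ** Q) *v (m t - (\<Gamma> *v m t + \<eta>))))
          (at t within {0..T})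
     \<and> (y has_vector_derivative
          (- (transpose A *v y t) + Q *v (m t - (\<Gamma> *v m t + \<eta>)))) (at t within {0..T}))
    \<and> m 0 = m0 \<and> p T = H *v m T \<and> y T = - (H *v m T)"

text \<open>Classical solutions on [0,T] of the system (AV_N); ubar = R^{-1} B^T y with y from (MF),
  and xbar is the prescribed initial value of x_N.\<close>
definition AV_sol :: "real \<Rightarrow> real \<Rightarrow> real^'n^'n \<Rightarrow> real^'k^'n \<Rightarrow> real^'n^'n \<Rightarrow> real^'n^'n
                  \<Rightarrow> real^'n^'n \<Rightarrow> real^'n^'n \<Rightarrow> real^'k^'k \<Rightarrow> real^'n \<Rightarrow> real^'n
                  \<Rightarrow> (real \<Rightarrow> real^'k) \<Rightarrow> real^'n
                  \<Rightarrow> (real \<Rightarrow> real^'n) \<Rightarrow> (real \<Rightarrow> real^'n) \<Rightarrow> (real \<Rightarrow> real^'n) \<Rightarrow> (real \<Rightarrow> real^'n)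
                  \<Rightarrow> bool" where
  "AV_sol T \<gamma> A B G \<Gamma> Q H R \<eta> m0 ubar xbar xN mN pN yN \<longleftrightarrow>
    (\<forall>t\<in>{0..T}.
       (xN has_vector_derivative
          (A *v xN t + (B ** matrix_inv R ** transpose B) *v yN t + G *v mN t + \<gamma> *\<^sub>R pN t))
          (at t within {0..T})
     \<and> (mN has_vector_derivative ((A + G) *v mN t + B *v ubar t + \<gamma> *\<^sub>R pN t)) (at t within {0..T})
     \<and> (pN has_vector_derivative
          (- (transpose (A + G) *v pN t) - (transpose (mat 1 - \<Gamma>) ** Q) *v (xN t - (\<Gamma> *v mN t + \<eta>))))
          (at t within {0..T})
     \<and> (yN has_vector_derivative
          (- (transpose A *v yN t) + Q *v (xN t - (\<Gamma> *v mN t + \<eta>)))) (at t within {0..T}))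
    \<and> xN 0 = xbar \<and> mN 0 = m0 \<and> pN T = H *v xN T \<and> yN T = - (H *v xN T)"

end

theory Submission
  imports Defs
begin

lemma vd_inner:
  fixes w v :: "real \<Rightarrow> 'a::real_inner"
  assumes "(w has_vector_derivative a) (at t within S)" "(v has_vector_derivative b) (at t within S)"
  shows "((\<lambda>s. w s \<bullet> v s) has_real_derivative (a \<bullet> v t + w t \<bullet> b)) (at t within S)"
proof -
  have "((\<lambda>s. w s \<bullet> v s) has_derivative (\<lambda>h. w t \<bullet> (h *\<^sub>R b) + (h *\<^sub>R a) \<bullet> v t)) (at t within S)"
    using assms unfolding has_vector_derivative_def by (intro has_derivative_inner) auto
  then show ?thesis unfolding has_field_derivative_def
    by (rule has_derivative_eq_rhs) (auto simp: algebra_simps fun_eq_iff)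
qed

lemma gron:
  fixes w :: "real \<Rightarrow> 'a::real_inner"
  assumes T: "0 \<le> T"
  and d: "\<And>t. t \<in> {0..T} \<Longrightarrow> (w has_vector_derivative F t) (at t within {0..T})"
  and b: "\<And>t. t \<in> {0..T} \<Longrightarrow> norm (F t) \<le> L * norm (w t)" and L: "0 \<le> L"
  and t: "t \<in> {0..T}"
  shows "norm (w t) \<le> exp (L*T) * norm (w 0)" "norm (w t) \<le> exp (L*T) * norm (w T)"
proof -
  have cont: "continuous_on {0..T} w"
    using d by (metis has_vector_derivative_continuous continuous_at_imp_continuous_on continuous_on_eq_continuous_within)
  have dw: "((\<lambda>s. w s \<bullet> w s) has_real_derivative (2 * (w s \<bullet> F s))) (at s)" if "0 < s" "s < T" for s
  proof -
    have "at s within {0..T} = at s" using that by (intro at_within_interior) auto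
    then have "(w has_vector_derivative F s) (at s)" using d[of s] that by auto
    from vd_inner[OF this this] show ?thesis by (simp add: inner_commute)
  qed
  have ib: "\<bar>w s \<bullet> F s\<bar> \<le> L * (w s \<bullet> w s)" if "s \<in> {0..T}" for s
  proof -
    have "\<bar>w s \<bullet> F s\<bar> \<le> norm (w s) * norm (F s)" by (rule Cauchy_Schwarz_ineq2)
    also have "\<dots> \<le> norm (w s) * (L * norm (w s))" using b[OF that] by (simp add: mult_left_mono)
    finally show ?thesis by (simp add: power2_norm_eq_inner[symmetric] power2_eq_square algebra_simps)
  qed
  let ?f = "\<lambda>s. exp (-(2*L) * s) * (w s \<bullet> w s)"
  have cf: "continuous_on {0..T} ?f"
    by (intro continuous_intros cont)
  have "?f 0 \<ge> ?f t"
  proof (rule DERIV_nonpos_imp_decreasing_open[of 0 t ?f])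
    show "0 \<le> t" using t by auto
    show "continuous_on {0..t} ?f" using t by (intro continuous_on_subset[OF cf]) auto
    fix s assume s: "0 < s" "s < t"
    have "(?f has_real_derivative (-(2*L)) * exp (-(2*L) * s) * (w s \<bullet> w s) + exp (-(2*L) * s) * (2 * (w s \<bullet> F s))) (at s)"
      using dw[of s] s t by (auto intro!: derivative_eq_intros)
    moreover have "(-(2*L)) * exp (-(2*L) * s) * (w s \<bullet> w s) + exp (-(2*L) * s) * (2 * (w s \<bullet> F s)) \<le> 0"
    proof -
      have "w s \<bullet> F s \<le> L * (w s \<bullet> w s)" using ib[of s] s t by auto
      then have "exp (-(2*L) * s) * (w s \<bullet> F s) \<le> exp (-(2*L) * s) * (L * (w s \<bullet> w s))"
        by (intro mult_left_mono) auto
      then show ?thesis by (simp add: algebra_simps)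
    qed
    ultimately show "\<exists>y. (?f has_real_derivative y) (at s) \<and> y \<le> 0" by blast
  qed
  then have "w t \<bullet> w t \<le> exp (2*L*t) * (w 0 \<bullet> w 0)"
    by (simp add: exp_minus field_simps)
  also have "\<dots> \<le> exp (2*L*T) * (w 0 \<bullet> w 0)"
    using t L by (intro mult_right_mono) (auto intro: mult_left_mono)
  finally have "(norm (w t))^2 \<le> (exp (L*T) * norm (w 0))^2"
    by (simp add: power2_norm_eq_inner power_mult_distrib flip: exp_double[of "L*T"]) (simp add: mult_ac)
  then show "norm (w t) \<le> exp (L*T) * norm (w 0)"
    by (rule power2_le_imp_le) simp
  let ?g = "\<lambda>s. exp ((2*L) * s) * (w s \<bullet> w s)"
  have cg: "continuous_on {0..T} ?g"
    by (intro continuous_intros cont)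
  have "?g t \<le> ?g T"
  proof (rule DERIV_nonneg_imp_increasing_open[of t T ?g])
    show "t \<le> T" using t by auto
    show "continuous_on {t..T} ?g" using t by (intro continuous_on_subset[OF cg]) auto
    fix s assume s: "t < s" "s < T"
    have "(?g has_real_derivative (2*L) * exp ((2*L) * s) * (w s \<bullet> w s) + exp ((2*L) * s) * (2 * (w s \<bullet> F s))) (at s)"
      using dw[of s] s t by (auto intro!: derivative_eq_intros)
    moreover have "(2*L) * exp ((2*L) * s) * (w s \<bullet> w s) + exp ((2*L) * s) * (2 * (w s \<bullet> F s)) \<ge> 0"
    proof -
      have "- (w s \<bullet> F s) \<le> L * (w s \<bullet> w s)" using ib[of s] s t by auto
      then have "exp ((2*L) * s) * (- (w s \<bullet> F s)) \<le> exp ((2*L) * s) * (L * (w s \<bullet> w s))"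
        by (intro mult_left_mono) auto
      then show ?thesis by (simp add: algebra_simps)
    qed
    ultimately show "\<exists>y. (?g has_real_derivative y) (at s) \<and> y \<ge> 0" by blast
  qed
  then have "exp (2*L*t) * (w t \<bullet> w t) \<le> exp (2*L*T) * (w T \<bullet> w T)" by simp
  moreover have "w t \<bullet> w t \<le> exp (2*L*t) * (w t \<bullet> w t)"
  proof -
    have "1 \<le> exp (2*L*t)" using t L by simp
    from mult_right_mono[OF this, of "w t \<bullet> w t"] show ?thesis by simp
  qed
  ultimately have "(norm (w t))^2 \<le> (exp (L*T) * norm (w T))^2"
    by (simp add: power2_norm_eq_inner power_mult_distrib flip: exp_double[of "L*T"]) (simp add: mult_ac)
  then show "norm (w t) \<le> exp (L*T) * norm (w T)"
    by (rule power2_le_imp_le) simp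
qed

lemma inner_tr: "((A::real^'n^'m) *v x) \<bullet> y = x \<bullet> (transpose A *v y)"
  by (metis dot_lmul_matrix inner_commute transpose_matrix_vector)

lemma mat_bound: "\<exists>L\<ge>0. \<forall>x. norm ((A::real^'n^'m) *v x) \<le> L * norm x"
proof -
  obtain K where "\<And>x. norm (A *v x) \<le> norm x * K"
    using bounded_linear.bounded[OF matrix_vector_mul_bounded_linear[of A]] by blast
  then show ?thesis
    by (metis mult.commute mult_le_0_iff norm_ge_zero order.trans linorder_linear zero_le_mult_iff)
qed

lemma ftc_lint:
  fixes f F :: "real \<Rightarrow> 'a::euclidean_space"
  assumes "a \<le> b" "\<And>x. x \<in> {a..b} \<Longrightarrow> (F has_vector_derivative f x) (at x within {a..b})"
    "continuous_on {a..b} f"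
  shows "set_lebesgue_integral lborel {a..b} f = F b - F a"
  unfolding set_lebesgue_integral_def using assms by (intro integral_FTC_atLeastAtMost) auto

lemma zero_of_int0:
  fixes f :: "real \<Rightarrow> real"
  assumes T: "0 < T" and c: "continuous_on {0..T} f" and nn: "\<And>t. t \<in> {0..T} \<Longrightarrow> 0 \<le> f t"
    and le: "set_lebesgue_integral lborel {0..T} f \<le> 0" and t: "t \<in> {0..T}"
  shows "f t = 0"
proof -
  have si: "set_integrable lborel {0..T} f" by (rule borel_integrable_atLeastAtMost'[OF c])
  have eq: "set_lebesgue_integral lborel {0..T} f = integral {0..T} f"
    by (rule set_borel_integral_eq_integral(2)[OF si])
  have io: "f integrable_on {0..T}" by (rule set_borel_integral_eq_integral(1)[OF si])
  have "integral {0..T} f \<ge> 0" using nn by (intro integral_nonneg io) auto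
  then have "integral {0..T} f = 0" using le eq by auto
  then have "(f has_integral 0) (cbox 0 T)" using io by (metis box_real(2) integrable_integral)
  then show ?thesis
    using has_integral_0_cbox_imp_0[of 0 T f t] c nn T t by auto
qed

lemma vd_cont: "(\<And>t. t\<in>{0..T} \<Longrightarrow> (f has_vector_derivative f' t) (at t within {0..T})) \<Longrightarrow> continuous_on {0..T} f"
  by (metis has_vector_derivative_continuous continuous_at_imp_continuous_on continuous_on_eq_continuous_within)

lemma cont_mv[continuous_intros]: "continuous_on S f \<Longrightarrow> continuous_on S (\<lambda>t. (A::real^'n^'m) *v f t)"
  by (rule bounded_linear.continuous_on[OF matrix_vector_mul_bounded_linear])

lemma L2_cont: "continuous_on {0..T} (g::real \<Rightarrow> 'a::euclidean_space) \<Longrightarrow> L2_on T g"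
  unfolding L2_on_def by (auto intro!: borel_integrable_atLeastAtMost' continuous_intros)

lemma vd_sub: "(\<And>t. t\<in>{0..T} \<Longrightarrow> (f has_vector_derivative f' t) (at t within {0..T})) \<Longrightarrow> {a..b} \<subseteq> {0..T}
   \<Longrightarrow> t \<in> {a..b} \<Longrightarrow> (f has_vector_derivative f' t) (at t within {a..b})"
  by (meson has_vector_derivative_within_subset subsetD)

lemma alg1:
  fixes x m p y :: "real^'n" and nu :: "real^'k" and A G \<Gamma> Q :: "real^'n^'n" and B :: "real^'k^'n"
    and R :: "real^'k^'k" and \<gamma> :: real
  assumes Rnu: "R *v nu = transpose B *v y"
  shows "((A *v x + B *v nu + G *v m + \<gamma> *\<^sub>R p) - ((A + G) *v m + \<gamma> *\<^sub>R p)) \<bullet> y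
      + (x - m) \<bullet> (- (transpose A *v y) + Q *v (x - \<Gamma> *v m))
      - (((A + G) *v m + \<gamma> *\<^sub>R p) \<bullet> p
         + m \<bullet> (- (transpose (A + G) *v p) - (transpose (mat 1 - \<Gamma>) ** Q) *v (x - \<Gamma> *v m)))
    = qf Q (x - \<Gamma> *v m) + qf R nu - \<gamma> * (norm p)\<^sup>2"
proof -
  define v where "v = x - \<Gamma> *v m"
  have e0: "(A *v x + B *v nu + G *v m + \<gamma> *\<^sub>R p) - ((A + G) *v m + \<gamma> *\<^sub>R p) = A *v (x - m) + B *v nu"
    by (simp add: algebra_simps)
  have e1: "(B *v nu) \<bullet> y = qf R nu" using inner_tr[of B nu y] Rnu unfolding qf_def by simp
  have e2: "(A *v (x - m)) \<bullet> y = (x - m) \<bullet> (transpose A *v y)" by (rule inner_tr)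
  have e3: "((A + G) *v m) \<bullet> p = m \<bullet> (transpose (A + G) *v p)" by (rule inner_tr)
  have e4: "m \<bullet> ((transpose (mat 1 - \<Gamma>) ** Q) *v v) = (m - \<Gamma> *v m) \<bullet> (Q *v v)"
  proof -
    have "m \<bullet> ((transpose (mat 1 - \<Gamma>) ** Q) *v v) = m \<bullet> (transpose (mat 1 - \<Gamma>) *v (Q *v v))"
      by (simp add: matrix_vector_mul_assoc)
    also have "\<dots> = ((mat 1 - \<Gamma>) *v m) \<bullet> (Q *v v)" by (rule inner_tr[symmetric])
    also have "\<dots> = (m - \<Gamma> *v m) \<bullet> (Q *v v)" by (simp add: matrix_vector_mult_diff_rdistrib)
    finally show ?thesis .
  qed
  have "((A *v x + B *v nu + G *v m + \<gamma> *\<^sub>R p) - ((A + G) *v m + \<gamma> *\<^sub>R p)) \<bullet> y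
      + (x - m) \<bullet> (- (transpose A *v y) + Q *v v)
      - (((A + G) *v m + \<gamma> *\<^sub>R p) \<bullet> p
         + m \<bullet> (- (transpose (A + G) *v p) - (transpose (mat 1 - \<Gamma>) ** Q) *v v))
      = (A *v (x - m)) \<bullet> y + (B *v nu) \<bullet> y - (x - m) \<bullet> (transpose A *v y) + (x - m) \<bullet> (Q *v v)
        - (((A + G) *v m) \<bullet> p - m \<bullet> (transpose (A + G) *v p)) - \<gamma> * (p \<bullet> p)
        + m \<bullet> ((transpose (mat 1 - \<Gamma>) ** Q) *v v)"
    unfolding e0 by (simp add: inner_add_left inner_add_right inner_diff_left inner_diff_right)
  also have "\<dots> = qf R nu + (x - m) \<bullet> (Q *v v) + (m - \<Gamma> *v m) \<bullet> (Q *v v) - \<gamma> * (p \<bullet> p)"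
    unfolding e1 e2 e3 e4 by simp
  also have "\<dots> = qf Q v + qf R nu - \<gamma> * (norm p)\<^sup>2"
  proof -
    have "(x - m) \<bullet> (Q *v v) + (m - \<Gamma> *v m) \<bullet> (Q *v v) = ((x - m) + (m - \<Gamma> *v m)) \<bullet> (Q *v v)"
      by (simp only: inner_add_left)
    also have "(x - m) + (m - \<Gamma> *v m) = v" unfolding v_def by simp
    finally show ?thesis unfolding qf_def by (simp add: power2_norm_eq_inner)
  qed
  finally show ?thesis unfolding v_def .
qed

lemma alg2:
  fixes m p :: "real^'n" and A G \<Gamma> Q :: "real^'n^'n" and \<gamma> :: real
  assumes g: "\<gamma> > 0"
  shows "((A + G) *v m + \<gamma> *\<^sub>R p) \<bullet> p
         + m \<bullet> (- (transpose (A + G) *v p) - (transpose (mat 1 - \<Gamma>) ** Q) *v (m - \<Gamma> *v m))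
    = - qf (Qhat Q \<Gamma>) m + (1 / \<gamma>) * (norm (\<gamma> *\<^sub>R p))\<^sup>2"
proof -
  have e3: "((A + G) *v m) \<bullet> p = m \<bullet> (transpose (A + G) *v p)" by (rule inner_tr)
  have mm: "m - \<Gamma> *v m = (mat 1 - \<Gamma>) *v m" by (simp add: matrix_vector_mult_diff_rdistrib)
  have e4: "m \<bullet> ((transpose (mat 1 - \<Gamma>) ** Q) *v (m - \<Gamma> *v m)) = qf (Qhat Q \<Gamma>) m"
  proof -
    have "m \<bullet> ((transpose (mat 1 - \<Gamma>) ** Q) *v (m - \<Gamma> *v m)) = m \<bullet> (transpose (mat 1 - \<Gamma>) *v (Q *v ((mat 1 - \<Gamma>) *v m)))"
      by (simp add: matrix_vector_mul_assoc mm) (metis matrix_mul_assoc)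
    also have "\<dots> = qf (Qhat Q \<Gamma>) m"
      unfolding qf_def Qhat_def by (simp add: matrix_vector_mul_assoc) (metis matrix_mul_assoc)
    finally show ?thesis .
  qed
  have n: "(1 / \<gamma>) * (norm (\<gamma> *\<^sub>R p))\<^sup>2 = \<gamma> * (p \<bullet> p)"
  proof -
    have "(norm (\<gamma> *\<^sub>R p))\<^sup>2 = \<gamma>\<^sup>2 * (norm p)\<^sup>2" by (simp add: power_mult_distrib)
    then have "(1 / \<gamma>) * (norm (\<gamma> *\<^sub>R p))\<^sup>2 = \<gamma> * (norm p)\<^sup>2" using g by (simp add: power2_eq_square)
    then show ?thesis by (simp only: power2_norm_eq_inner)
  qed
  show ?thesis unfolding n
    using e3 e4 by (simp add: inner_add_left inner_add_right inner_diff_left inner_diff_right)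
qed

lemma homog:
  fixes T \<gamma> :: real and A G \<Gamma> Q H :: "real^'n^'n" and B :: "real^'k^'n" and R :: "real^'k^'k"
    and X M P Y :: "real \<Rightarrow> real^'n"
  assumes T: "T > 0" and gam: "\<gamma> > 0" and RRi: "R ** matrix_inv R = mat 1"
    and H1: "H1 T \<gamma> A G \<Gamma> Q H" and H2: "H2 T \<gamma> A B G \<Gamma> Q H R"
    and dX: "\<And>t. t \<in> {0..T} \<Longrightarrow> (X has_vector_derivative
          (A *v X t + (B ** matrix_inv R ** transpose B) *v Y t + G *v M t + \<gamma> *\<^sub>R P t)) (at t within {0..T})"
    and dM: "\<And>t. t \<in> {0..T} \<Longrightarrow> (M has_vector_derivative ((A + G) *v M t + \<gamma> *\<^sub>R P t)) (at t within {0..T})"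
    and dP: "\<And>t. t \<in> {0..T} \<Longrightarrow> (P has_vector_derivative
          (- (transpose (A + G) *v P t) - (transpose (mat 1 - \<Gamma>) ** Q) *v (X t - \<Gamma> *v M t))) (at t within {0..T})"
    and dY: "\<And>t. t \<in> {0..T} \<Longrightarrow> (Y has_vector_derivative
          (- (transpose A *v Y t) + Q *v (X t - \<Gamma> *v M t))) (at t within {0..T})"
    and X0: "X 0 = 0" and M0: "M 0 = 0" and PT: "P T = H *v X T" and YT: "Y T = - (H *v X T)"
  shows "P 0 = 0 \<and> Y 0 = 0"
proof -
  define \<nu> where "\<nu> = (\<lambda>t. (matrix_inv R ** transpose B) *v Y t)"
  have cX: "continuous_on {0..T} X" by (rule vd_cont[OF dX])
  have cM: "continuous_on {0..T} M" by (rule vd_cont[OF dM])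
  have cP: "continuous_on {0..T} P" by (rule vd_cont[OF dP])
  have cY: "continuous_on {0..T} Y" by (rule vd_cont[OF dY])
  have cnu: "continuous_on {0..T} \<nu>" unfolding \<nu>_def by (intro continuous_intros cY)
  have BBY: "(B ** matrix_inv R ** transpose B) *v Y t = B *v \<nu> t" for t
    by (simp add: \<nu>_def matrix_vector_mul_assoc matrix_mul_assoc)
  have Rnu: "R *v \<nu> t = transpose B *v Y t" for t
  proof -
    have "R *v \<nu> t = (R ** matrix_inv R ** transpose B) *v Y t"
      by (simp add: \<nu>_def matrix_vector_mul_assoc matrix_mul_assoc)
    then show ?thesis by (simp only: RRi matrix_mul_lid)
  qed
  from H2 obtain \<delta>0 where d0: "\<delta>0 > 0" and H2': "\<And>(\<nu>::real \<Rightarrow> real^'k) zi z q.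
       L2_on T \<nu> \<and> continuous_on {0..T} zi \<and> continuous_on {0..T} z \<and> continuous_on {0..T} q \<and>
       (\<forall>t\<in>{0..T}. zi t = set_lebesgue_integral lborel {0..t}
           (\<lambda>s. A *v zi s + B *v \<nu> s + G *v z s + \<gamma> *\<^sub>R q s)) \<and>
       (\<forall>t\<in>{0..T}. z t = set_lebesgue_integral lborel {0..t}
           (\<lambda>s. (A + G) *v z s + \<gamma> *\<^sub>R q s)) \<and>
       (\<forall>t\<in>{0..T}. q t = H *v zi T + set_lebesgue_integral lborel {t..T}
           (\<lambda>s. transpose (A + G) *v q s + (transpose (mat 1 - \<Gamma>) ** Q) *v (zi s - \<Gamma> *v z s)))
       \<Longrightarrow> set_lebesgue_integral lborel {0..T}
              (\<lambda>t. qf Q (zi t - \<Gamma> *v z t) + qf R (\<nu> t) - \<gamma> * (norm (q t))\<^sup>2)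
            + qf H (zi T) \<ge> \<delta>0 * L2_norm_sq T \<nu>"
    unfolding H2_def by blast
  have iX: "X t = set_lebesgue_integral lborel {0..t} (\<lambda>s. A *v X s + B *v \<nu> s + G *v M s + \<gamma> *\<^sub>R P s)"
    if t: "t \<in> {0..T}" for t
  proof -
    have "set_lebesgue_integral lborel {0..t} (\<lambda>s. A *v X s + B *v \<nu> s + G *v M s + \<gamma> *\<^sub>R P s) = X t - X 0"
    proof (rule ftc_lint)
      show "0 \<le> t" using t by auto
      fix s assume "s \<in> {0..t}"
      then show "(X has_vector_derivative A *v X s + B *v \<nu> s + G *v M s + \<gamma> *\<^sub>R P s) (at s within {0..t})"
        using vd_sub[OF dX, of 0 t s] t by (auto simp: BBY)
    next
      show "continuous_on {0..t} (\<lambda>s. A *v X s + B *v \<nu> s + G *v M s + \<gamma> *\<^sub>R P s)"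
        using t by (intro continuous_intros continuous_on_subset[OF cX] continuous_on_subset[OF cM]
            continuous_on_subset[OF cP] continuous_on_subset[OF cnu]) auto
    qed
    then show ?thesis using X0 by simp
  qed
  have iM: "M t = set_lebesgue_integral lborel {0..t} (\<lambda>s. (A + G) *v M s + \<gamma> *\<^sub>R P s)"
    if t: "t \<in> {0..T}" for t
  proof -
    have "set_lebesgue_integral lborel {0..t} (\<lambda>s. (A + G) *v M s + \<gamma> *\<^sub>R P s) = M t - M 0"
    proof (rule ftc_lint)
      show "0 \<le> t" using t by auto
      fix s assume "s \<in> {0..t}"
      then show "(M has_vector_derivative (A + G) *v M s + \<gamma> *\<^sub>R P s) (at s within {0..t})"
        using vd_sub[OF dM, of 0 t s] t by auto
    next
      show "continuous_on {0..t} (\<lambda>s. (A + G) *v M s + \<gamma> *\<^sub>R P s)"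
        using t by (intro continuous_intros continuous_on_subset[OF cM]
            continuous_on_subset[OF cP]) auto
    qed
    then show ?thesis using M0 by simp
  qed
  have iP: "P t = H *v X T + set_lebesgue_integral lborel {t..T}
           (\<lambda>s. transpose (A + G) *v P s + (transpose (mat 1 - \<Gamma>) ** Q) *v (X s - \<Gamma> *v M s))"
    if t: "t \<in> {0..T}" for t
  proof -
    have "set_lebesgue_integral lborel {t..T}
           (\<lambda>s. transpose (A + G) *v P s + (transpose (mat 1 - \<Gamma>) ** Q) *v (X s - \<Gamma> *v M s))
          = (\<lambda>s. - P s) T - (\<lambda>s. - P s) t"
    proof (rule ftc_lint)
      show "t \<le> T" using t by auto
      fix s assume "s \<in> {t..T}"
      then have "(P has_vector_derivative (- (transpose (A + G) *v P s) - (transpose (mat 1 - \<Gamma>) ** Q) *v (X s - \<Gamma> *v M s))) (at s within {t..T})"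
        using vd_sub[OF dP, of t T s] t by auto
      from has_vector_derivative_minus[OF this] show "((\<lambda>s. - P s) has_vector_derivative transpose (A + G) *v P s + (transpose (mat 1 - \<Gamma>) ** Q) *v (X s - \<Gamma> *v M s)) (at s within {t..T})"
        by (simp add: algebra_simps)
    next
      show "continuous_on {t..T} (\<lambda>s. transpose (A + G) *v P s + (transpose (mat 1 - \<Gamma>) ** Q) *v (X s - \<Gamma> *v M s))"
        using t by (intro continuous_intros continuous_on_subset[OF cX] continuous_on_subset[OF cM]
            continuous_on_subset[OF cP]) auto
    qed
    then show ?thesis using PT by simp
  qed
  have J: "set_lebesgue_integral lborel {0..T}
              (\<lambda>t. qf Q (X t - \<Gamma> *v M t) + qf R (\<nu> t) - \<gamma> * (norm (P t))\<^sup>2)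
            + qf H (X T) \<ge> \<delta>0 * L2_norm_sq T \<nu>"
    by (rule H2'[of \<nu> X M P]) (use L2_cont[OF cnu] cX cM cP iX iM iP in blast)
  have dphi: "((\<lambda>s. (X s - M s) \<bullet> Y s - M s \<bullet> P s) has_vector_derivative
      (qf Q (X s - \<Gamma> *v M s) + qf R (\<nu> s) - \<gamma> * (norm (P s))\<^sup>2)) (at s within {0..T})"
    if s: "s \<in> {0..T}" for s
  proof -
    have a: "((\<lambda>s. X s - M s) has_vector_derivative
       ((A *v X s + B *v \<nu> s + G *v M s + \<gamma> *\<^sub>R P s) - ((A + G) *v M s + \<gamma> *\<^sub>R P s))) (at s within {0..T})"
      using has_vector_derivative_diff[OF dX[OF s] dM[OF s]] by (simp add: BBY)
    have "((\<lambda>s. (X s - M s) \<bullet> Y s - M s \<bullet> P s) has_real_derivative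
       (((A *v X s + B *v \<nu> s + G *v M s + \<gamma> *\<^sub>R P s) - ((A + G) *v M s + \<gamma> *\<^sub>R P s)) \<bullet> Y s
      + (X s - M s) \<bullet> (- (transpose A *v Y s) + Q *v (X s - \<Gamma> *v M s))
      - (((A + G) *v M s + \<gamma> *\<^sub>R P s) \<bullet> P s
         + M s \<bullet> (- (transpose (A + G) *v P s) - (transpose (mat 1 - \<Gamma>) ** Q) *v (X s - \<Gamma> *v M s))))) (at s within {0..T})"
      by (intro DERIV_diff vd_inner a dY[OF s] dM[OF s] dP[OF s])
    then show ?thesis
      unfolding alg1[OF Rnu] by (simp add: has_real_derivative_iff_has_vector_derivative)
  qed
  have cJ: "continuous_on {0..T} (\<lambda>s. qf Q (X s - \<Gamma> *v M s) + qf R (\<nu> s) - \<gamma> * (norm (P s))\<^sup>2)"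
    unfolding qf_def by (intro continuous_intros cX cM cP cnu)
  have Jeq: "set_lebesgue_integral lborel {0..T} (\<lambda>s. qf Q (X s - \<Gamma> *v M s) + qf R (\<nu> s) - \<gamma> * (norm (P s))\<^sup>2)
     = ((X T - M T) \<bullet> Y T - M T \<bullet> P T) - ((X 0 - M 0) \<bullet> Y 0 - M 0 \<bullet> P 0)"
    by (rule ftc_lint[OF _ dphi cJ]) (use T in auto)
  also have "\<dots> = - qf H (X T)" using X0 M0 PT YT unfolding qf_def
    by (simp add: inner_diff_left algebra_simps)
  finally have "\<delta>0 * L2_norm_sq T \<nu> \<le> 0" using J by simp
  then have "L2_norm_sq T \<nu> \<le> 0" using d0 by (simp add: mult_le_0_iff)
  then have nu0: "\<nu> t = 0" if "t \<in> {0..T}" for t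
  proof -
    have "continuous_on {0..T} (\<lambda>t. (norm (\<nu> t))\<^sup>2)" by (intro continuous_intros cnu)
    from zero_of_int0[OF T this _ _ that] \<open>L2_norm_sq T \<nu> \<le> 0\<close> show ?thesis
      unfolding L2_norm_sq_def by auto
  qed
  obtain LA where LA: "LA \<ge> 0" "\<And>x. norm (A *v x) \<le> LA * norm x" using mat_bound[of A] by blast
  have XM: "X t = M t" if t: "t \<in> {0..T}" for t
  proof -
    have dD: "((\<lambda>s. X s - M s) has_vector_derivative A *v (X s - M s)) (at s within {0..T})"
      if s: "s \<in> {0..T}" for s
      using has_vector_derivative_diff[OF dX[OF s] dM[OF s]] nu0[OF s]
      by (simp add: BBY algebra_simps)
    have "norm (X t - M t) \<le> exp (LA * T) * norm (X 0 - M 0)"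
      by (rule gron(1)[OF _ dD LA(2) LA(1) t]) (use T in auto)
    then show ?thesis using X0 M0 by simp
  qed
  from H1 obtain \<epsilon>0 where e0: "\<epsilon>0 > 0" and H1': "\<And>(g::real \<Rightarrow> real^'n) z.
       L2_on T g \<and> continuous_on {0..T} z \<and>
       (\<forall>t\<in>{0..T}. z t = set_lebesgue_integral lborel {0..t} (\<lambda>s. (A + G) *v z s + g s))
       \<Longrightarrow> set_lebesgue_integral lborel {0..T}
              (\<lambda>t. - qf (Qhat Q \<Gamma>) (z t) + (1 / \<gamma>) * (norm (g t))\<^sup>2)
            - qf H (z T) \<ge> \<epsilon>0 * L2_norm_sq T g"
    unfolding H1_def by blast
  have cg: "continuous_on {0..T} (\<lambda>t. \<gamma> *\<^sub>R P t)" by (intro continuous_intros cP)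
  have J1: "set_lebesgue_integral lborel {0..T}
              (\<lambda>t. - qf (Qhat Q \<Gamma>) (M t) + (1 / \<gamma>) * (norm (\<gamma> *\<^sub>R P t))\<^sup>2)
            - qf H (M T) \<ge> \<epsilon>0 * L2_norm_sq T (\<lambda>t. \<gamma> *\<^sub>R P t)"
    by (rule H1') (use L2_cont[OF cg] cM iM in blast)
  have dpsi: "((\<lambda>s. M s \<bullet> P s) has_vector_derivative
      (- qf (Qhat Q \<Gamma>) (M s) + (1 / \<gamma>) * (norm (\<gamma> *\<^sub>R P s))\<^sup>2)) (at s within {0..T})"
    if s: "s \<in> {0..T}" for s
  proof -
    have "((\<lambda>s. M s \<bullet> P s) has_real_derivative
       (((A + G) *v M s + \<gamma> *\<^sub>R P s) \<bullet> P s
         + M s \<bullet> (- (transpose (A + G) *v P s) - (transpose (mat 1 - \<Gamma>) ** Q) *v (M s - \<Gamma> *v M s)))) (at s within {0..T})"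
      using vd_inner[OF dM[OF s] dP[OF s]] XM[OF s] by simp
    then show ?thesis
      unfolding alg2[OF gam] by (simp add: has_real_derivative_iff_has_vector_derivative)
  qed
  have cJ1: "continuous_on {0..T} (\<lambda>s. - qf (Qhat Q \<Gamma>) (M s) + (1 / \<gamma>) * (norm (\<gamma> *\<^sub>R P s))\<^sup>2)"
    unfolding qf_def by (intro continuous_intros cM cP)
  have "set_lebesgue_integral lborel {0..T} (\<lambda>s. - qf (Qhat Q \<Gamma>) (M s) + (1 / \<gamma>) * (norm (\<gamma> *\<^sub>R P s))\<^sup>2)
     = M T \<bullet> P T - M 0 \<bullet> P 0"
    by (rule ftc_lint[OF _ dpsi cJ1]) (use T in auto)
  also have "\<dots> = qf H (M T)" using M0 PT XM[of T] T unfolding qf_def by simp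
  finally have "\<epsilon>0 * L2_norm_sq T (\<lambda>t. \<gamma> *\<^sub>R P t) \<le> 0" using J1 by simp
  then have "L2_norm_sq T (\<lambda>t. \<gamma> *\<^sub>R P t) \<le> 0" using e0 by (simp add: mult_le_0_iff)
  then have P0: "P t = 0" if "t \<in> {0..T}" for t
  proof -
    have "continuous_on {0..T} (\<lambda>t. (norm (\<gamma> *\<^sub>R P t))\<^sup>2)" by (intro continuous_intros cP)
    from zero_of_int0[OF T this _ _ that] \<open>L2_norm_sq T (\<lambda>t. \<gamma> *\<^sub>R P t) \<le> 0\<close> gam show ?thesis
      unfolding L2_norm_sq_def by auto
  qed
  obtain LAG where LAG: "LAG \<ge> 0" "\<And>x. norm ((A + G) *v x) \<le> LAG * norm x" using mat_bound[of "A + G"] by blast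
  have M00: "M t = 0" if t: "t \<in> {0..T}" for t
  proof -
    have "(M has_vector_derivative (A + G) *v M s) (at s within {0..T})" if s: "s \<in> {0..T}" for s
      using dM[OF s] P0[OF s] by simp
    from gron(1)[OF _ this LAG(2) LAG(1) t] T M0 show ?thesis by simp
  qed
  obtain LAt where LAt: "LAt \<ge> 0" "\<And>x. norm (- (transpose A *v x)) \<le> LAt * norm x" using mat_bound[of "transpose A"] by auto
  have "(Y has_vector_derivative - (transpose A *v Y s)) (at s within {0..T})" if s: "s \<in> {0..T}" for s
    using dY[OF s] M00[OF s] XM[OF s] by simp
  from gron(2)[OF _ this LAt(2) LAt(1), of 0] T YT XM[of T] M00[of T] have "Y 0 = 0" by simp
  then show ?thesis using P0[of 0] T by simp
qed

definition solH :: "real \<Rightarrow> real \<Rightarrow> real^'n^'n \<Rightarrow> real^'k^'n \<Rightarrow> real^'n^'n \<Rightarrow> real^'n^'n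
                  \<Rightarrow> real^'n^'n \<Rightarrow> real^'n^'n \<Rightarrow> real^'k^'k
                  \<Rightarrow> (real \<Rightarrow> real^'n) \<Rightarrow> (real \<Rightarrow> real^'n) \<Rightarrow> (real \<Rightarrow> real^'n) \<Rightarrow> (real \<Rightarrow> real^'n) \<Rightarrow> bool" where
  "solH T \<gamma> A B G \<Gamma> Q H R X M P Y \<longleftrightarrow>
    (\<forall>t\<in>{0..T}. (X has_vector_derivative
          (A *v X t + (B ** matrix_inv R ** transpose B) *v Y t + G *v M t + \<gamma> *\<^sub>R P t)) (at t within {0..T})
     \<and> (M has_vector_derivative ((A + G) *v M t + \<gamma> *\<^sub>R P t)) (at t within {0..T})
     \<and> (P has_vector_derivative
          (- (transpose (A + G) *v P t) - (transpose (mat 1 - \<Gamma>) ** Q) *v (X t - \<Gamma> *v M t))) (at t within {0..T})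
     \<and> (Y has_vector_derivative
          (- (transpose A *v Y t) + Q *v (X t - \<Gamma> *v M t))) (at t within {0..T}))
    \<and> M 0 = 0 \<and> P T = H *v X T \<and> Y T = - (H *v X T)"

lemma vd_eq: "(f has_vector_derivative a) F \<Longrightarrow> a = b \<Longrightarrow> (f has_vector_derivative b) F" by simp

lemma solH_add:
  assumes s1: "solH T \<gamma> A B G \<Gamma> Q H R X M P Y" and s2: "solH T \<gamma> A B G \<Gamma> Q H R X' M' P' Y'"
  shows "solH T \<gamma> A B G \<Gamma> Q H R (\<lambda>t. X t + X' t) (\<lambda>t. M t + M' t) (\<lambda>t. P t + P' t) (\<lambda>t. Y t + Y' t)"
  unfolding solH_def
proof (intro conjI ballI)
  fix t assume t: "t \<in> {0..T}"
  note a = s1[unfolded solH_def, THEN conjunct1, rule_format, OF t]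
  note b = s2[unfolded solH_def, THEN conjunct1, rule_format, OF t]
  show "((\<lambda>t. X t + X' t) has_vector_derivative A *v (X t + X' t) + (B ** matrix_inv R ** transpose B) *v (Y t + Y' t) +
          G *v (M t + M' t) + \<gamma> *\<^sub>R (P t + P' t)) (at t within {0..T})"
    by (rule vd_eq[OF has_vector_derivative_add[OF a[THEN conjunct1] b[THEN conjunct1]]]) (simp add: algebra_simps)
  show "((\<lambda>t. M t + M' t) has_vector_derivative (A + G) *v (M t + M' t) + \<gamma> *\<^sub>R (P t + P' t)) (at t within {0..T})"
    by (rule vd_eq[OF has_vector_derivative_add[OF a[THEN conjunct2, THEN conjunct1] b[THEN conjunct2, THEN conjunct1]]]) (simp add: algebra_simps)
  show "((\<lambda>t. P t + P' t) has_vector_derivative - (transpose (A + G) *v (P t + P' t)) -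
          (transpose (mat 1 - \<Gamma>) ** Q) *v (X t + X' t - \<Gamma> *v (M t + M' t))) (at t within {0..T})"
    by (rule vd_eq[OF has_vector_derivative_add[OF a[THEN conjunct2, THEN conjunct2, THEN conjunct1] b[THEN conjunct2, THEN conjunct2, THEN conjunct1]]]) (simp add: algebra_simps)
  show "((\<lambda>t. Y t + Y' t) has_vector_derivative - (transpose A *v (Y t + Y' t)) + Q *v (X t + X' t - \<Gamma> *v (M t + M' t))) (at t within {0..T})"
    by (rule vd_eq[OF has_vector_derivative_add[OF a[THEN conjunct2, THEN conjunct2, THEN conjunct2] b[THEN conjunct2, THEN conjunct2, THEN conjunct2]]]) (simp add: algebra_simps)
qed (use s1 s2 in \<open>auto simp: solH_def algebra_simps\<close>)

lemma solH_scale: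
  assumes s1: "solH T \<gamma> A B G \<Gamma> Q H R X M P Y"
  shows "solH T \<gamma> A B G \<Gamma> Q H R (\<lambda>t. c *\<^sub>R X t) (\<lambda>t. c *\<^sub>R M t) (\<lambda>t. c *\<^sub>R P t) (\<lambda>t. c *\<^sub>R Y t)"
  unfolding solH_def
proof (intro conjI ballI)
  fix t assume t: "t \<in> {0..T}"
  note a = s1[unfolded solH_def, THEN conjunct1, rule_format, OF t]
  show "((\<lambda>t. c *\<^sub>R X t) has_vector_derivative A *v (c *\<^sub>R X t) + (B ** matrix_inv R ** transpose B) *v (c *\<^sub>R Y t) +
          G *v (c *\<^sub>R M t) + \<gamma> *\<^sub>R (c *\<^sub>R P t)) (at t within {0..T})"
    by (rule vd_eq[OF bounded_linear.has_vector_derivative[OF bounded_linear_scaleR_right a[THEN conjunct1]]]) (simp add: algebra_simps)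
  show "((\<lambda>t. c *\<^sub>R M t) has_vector_derivative (A + G) *v (c *\<^sub>R M t) + \<gamma> *\<^sub>R (c *\<^sub>R P t)) (at t within {0..T})"
    by (rule vd_eq[OF bounded_linear.has_vector_derivative[OF bounded_linear_scaleR_right a[THEN conjunct2, THEN conjunct1]]]) (simp add: algebra_simps)
  show "((\<lambda>t. c *\<^sub>R P t) has_vector_derivative - (transpose (A + G) *v (c *\<^sub>R P t)) -
          (transpose (mat 1 - \<Gamma>) ** Q) *v (c *\<^sub>R X t - \<Gamma> *v (c *\<^sub>R M t))) (at t within {0..T})"
    by (rule vd_eq[OF bounded_linear.has_vector_derivative[OF bounded_linear_scaleR_right a[THEN conjunct2, THEN conjunct2, THEN conjunct1]]]) (simp add: algebra_simps)
  show "((\<lambda>t. c *\<^sub>R Y t) has_vector_derivative - (transpose A *v (c *\<^sub>R Y t)) + Q *v (c *\<^sub>R X t - \<Gamma> *v (c *\<^sub>R M t))) (at t within {0..T})"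
    by (rule vd_eq[OF bounded_linear.has_vector_derivative[OF bounded_linear_scaleR_right a[THEN conjunct2, THEN conjunct2, THEN conjunct2]]]) (simp add: algebra_simps)
qed (use s1 in \<open>auto simp: solH_def algebra_simps\<close>)

lemma sol_bound:
  fixes T \<gamma> :: real and A G \<Gamma> Q H :: "real^'n^'n" and B :: "real^'k^'n" and R :: "real^'k^'k"
  assumes T: "T > 0" and gam: "\<gamma> > 0" and RRi: "R ** matrix_inv R = mat 1"
    and H1: "H1 T \<gamma> A G \<Gamma> Q H" and H2: "H2 T \<gamma> A B G \<Gamma> Q H R"
  shows "\<exists>C. \<forall>X M P Y. solH T \<gamma> A B G \<Gamma> Q H R X M P Y \<longrightarrow>
     (\<forall>t\<in>{0..T}. norm (X t) + norm (M t) + norm (P t) + norm (Y t) \<le> C * norm (X 0))"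
proof -
  define V where "V = {(X 0, M 0, P 0, Y 0) | X M P Y. solH T \<gamma> A B G \<Gamma> Q H R X M P Y}"
  have z: "solH T \<gamma> A B G \<Gamma> Q H R (\<lambda>t. 0) (\<lambda>t. 0) (\<lambda>t. 0) (\<lambda>t. 0)"
    unfolding solH_def by (simp add: has_vector_derivative_const)
  have sub: "subspace V"
    unfolding subspace_def
  proof (intro conjI ballI allI)
    show "0 \<in> V" unfolding V_def using z by (force simp: zero_prod_def)
  next
    fix x y assume "x \<in> V" "y \<in> V"
    then obtain X M P Y X' M' P' Y' where "solH T \<gamma> A B G \<Gamma> Q H R X M P Y" "x = (X 0, M 0, P 0, Y 0)"
      "solH T \<gamma> A B G \<Gamma> Q H R X' M' P' Y'" "y = (X' 0, M' 0, P' 0, Y' 0)"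
      unfolding V_def by blast
    then show "x + y \<in> V" unfolding V_def using solH_add by fastforce
  next
    fix c x assume "x \<in> V"
    then obtain X M P Y where "solH T \<gamma> A B G \<Gamma> Q H R X M P Y" "x = (X 0, M 0, P 0, Y 0)"
      unfolding V_def by blast
    then show "c *\<^sub>R x \<in> V" unfolding V_def using solH_scale by fastforce
  qed
  have inj: "\<forall>v\<in>V. fst v = 0 \<longrightarrow> v = 0"
  proof (intro ballI impI)
    fix v assume "v \<in> V" "fst v = 0"
    then obtain X M P Y where s: "solH T \<gamma> A B G \<Gamma> Q H R X M P Y" and v: "v = (X 0, M 0, P 0, Y 0)"
      unfolding V_def by blast
    have X0: "X 0 = 0" using \<open>fst v = 0\<close> v by simp
    have "P 0 = 0 \<and> Y 0 = 0"
      using homog[OF T gam RRi H1 H2, of X Y M P] X0 s by (auto simp: solH_def)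
    then show "v = 0" using v s X0 by (simp add: solH_def zero_prod_def)
  qed
  obtain e where e: "e > 0" "\<And>v. v \<in> V \<Longrightarrow> norm (fst v) \<ge> e * norm v"
    using injective_imp_isometric[OF closed_subspace[OF sub] sub bounded_linear_fst inj] by blast
  define Kf :: "(real^'n) \<times> (real^'n) \<times> (real^'n) \<times> (real^'n) \<Rightarrow> (real^'n) \<times> (real^'n) \<times> (real^'n) \<times> (real^'n)" where
    "Kf = (\<lambda>(x, m, p, y). (A *v x + (B ** matrix_inv R ** transpose B) *v y + G *v m + \<gamma> *\<^sub>R p,
        (A + G) *v m + \<gamma> *\<^sub>R p,
        - (transpose (A + G) *v p) - (transpose (mat 1 - \<Gamma>) ** Q) *v (x - \<Gamma> *v m),
        - (transpose A *v y) + Q *v (x - \<Gamma> *v m)))"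
  have "linear Kf"
    by (rule linearI) (auto simp: Kf_def case_prod_beta algebra_simps simp del: transpose_matrix_vector)
  then have "bounded_linear Kf" by (simp add: linear_conv_bounded_linear)
  then obtain L where L: "L > 0" "\<And>x. norm (Kf x) \<le> norm x * L"
    using bounded_linear.pos_bounded by blast
  show ?thesis
  proof (intro exI allI impI ballI)
    fix X M P Y t assume s: "solH T \<gamma> A B G \<Gamma> Q H R X M P Y" and t: "t \<in> {0..T}"
    define w where "w = (\<lambda>s. (X s, M s, P s, Y s))"
    have dw: "(w has_vector_derivative Kf (w s)) (at s within {0..T})" if "s \<in> {0..T}" for s
      using s that unfolding w_def Kf_def solH_def by (auto intro!: has_vector_derivative_Pair)
    have g: "norm (w t) \<le> exp (L*T) * norm (w 0)"
      by (rule gron(1)[OF _ dw _ _ t]) (use T L in \<open>auto simp: mult.commute\<close>)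
    have "w 0 \<in> V" unfolding V_def w_def using s by blast
    then have "e * norm (w 0) \<le> norm (X 0)" using e(2) unfolding w_def by auto
    then have w0: "norm (w 0) \<le> norm (X 0) / e" using e(1) by (simp add: field_simps)
    have "norm (X t) + norm (M t) + norm (P t) + norm (Y t) \<le> 4 * norm (w t)"
      unfolding w_def
      using norm_fst_le[of "X t" "(M t, P t, Y t)"] norm_snd_le[of "(M t, P t, Y t)" "X t"]
        norm_fst_le[of "M t" "(P t, Y t)"] norm_snd_le[of "(P t, Y t)" "M t"]
        norm_fst_le[of "P t" "Y t"] norm_snd_le[of "Y t" "P t"] by linarith
    also have "\<dots> \<le> 4 * (exp (L*T) * (norm (X 0) / e))"
      using g w0 by (smt (verit) exp_gt_zero mult_left_mono)
    finally show "norm (X t) + norm (M t) + norm (P t) + norm (Y t) \<le> (4 * exp (L*T) / e) * norm (X 0)"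
      by (simp add: field_simps)
  qed
qed

theorem lemma21:
  fixes T \<gamma> :: real
    and A G \<Gamma> Q H :: "real^'n^'n"
    and B :: "real^'k^'n"
    and R :: "real^'k^'k"
    and \<eta> m0 :: "real^'n"
    and m p y :: "real \<Rightarrow> real^'n"
  assumes T_pos: "T > 0"
    and gamma_pos: "\<gamma> > 0"
    and Q_psd: "psd Q" and H_psd: "psd H" and R_pd: "pd R"
    and H1: "H1 T \<gamma> A G \<Gamma> Q H"
    and H2: "H2 T \<gamma> A B G \<Gamma> Q H R"
    and MF: "MF_sol T \<gamma> A B G \<Gamma> Q H R \<eta> m0 m p y"
    and MF_unique: "\<And>m' p' y'. MF_sol T \<gamma> A B G \<Gamma> Q H R \<eta> m0 m' p' y' \<Longrightarrow>
                      \<forall>t\<in>{0..T}. m' t = m t \<and> p' t = p t \<and> y' t = y t"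
  shows "\<exists>C. \<forall>(N::nat) (x0::nat \<Rightarrow> real^'n) xN mN pN yN.
           N \<ge> 1 \<longrightarrow>
           AV_sol T \<gamma> A B G \<Gamma> Q H R \<eta> m0
             (\<lambda>t. (matrix_inv R ** transpose B) *v y t)
             ((1 / real N) *\<^sub>R (\<Sum>i=1..N. x0 i)) xN mN pN yN \<longrightarrow>
           (\<forall>t\<in>{0..T}. norm (xN t - m t) + norm (mN t - m t) + norm (pN t - p t) + norm (yN t - y t)
               \<le> C * norm ((1 / real N) *\<^sub>R (\<Sum>i=1..N. x0 i) - m0))"
proof -
  have "\<forall>x. R *v x = 0 \<longrightarrow> x = 0"
  proof (intro allI impI)
    fix x assume "R *v x = 0"
    then have "qf R x = 0" by (simp add: qf_def)
    then show "x = 0" using R_pd unfolding pd_def by force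
  qed
  then have "invertible R" by (simp add: invertible_left_inverse matrix_left_invertible_ker)
  then have RRi: "R ** matrix_inv R = mat 1"
    unfolding invertible_def matrix_inv_def by (rule someI_ex[where P="\<lambda>A'. R ** A' = mat 1 \<and> A' ** R = mat 1", THEN conjunct1])
  obtain C where C: "\<And>X M P Y. solH T \<gamma> A B G \<Gamma> Q H R X M P Y \<Longrightarrow>
     (\<forall>t\<in>{0..T}. norm (X t) + norm (M t) + norm (P t) + norm (Y t) \<le> C * norm (X 0))"
    using sol_bound[OF T_pos gamma_pos RRi H1 H2] by blast
  show ?thesis
  proof (intro exI allI impI)
    fix N :: nat and x0 :: "nat \<Rightarrow> real^'n" and xN mN pN yN
    assume N: "N \<ge> 1" and av: "AV_sol T \<gamma> A B G \<Gamma> Q H R \<eta> m0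
             (\<lambda>t. (matrix_inv R ** transpose B) *v y t)
             ((1 / real N) *\<^sub>R (\<Sum>i=1..N. x0 i)) xN mN pN yN"
    let ?xb = "(1 / real N) *\<^sub>R (\<Sum>i=1..N. x0 i)"
    have Bu: "B *v ((matrix_inv R ** transpose B) *v v) = (B ** matrix_inv R ** transpose B) *v v" for v
      by (simp add: matrix_vector_mul_assoc matrix_mul_assoc)
    have s: "solH T \<gamma> A B G \<Gamma> Q H R (\<lambda>t. xN t - m t) (\<lambda>t. mN t - m t) (\<lambda>t. pN t - p t) (\<lambda>t. yN t - y t)"
      unfolding solH_def
    proof (intro conjI ballI)
      fix t assume t: "t \<in> {0..T}"
      note a = av[unfolded AV_sol_def, THEN conjunct1, rule_format, OF t]
      note b = MF[unfolded MF_sol_def, THEN conjunct1, rule_format, OF t]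
      show "((\<lambda>t. xN t - m t) has_vector_derivative A *v (xN t - m t) + (B ** matrix_inv R ** transpose B) *v (yN t - y t) +
          G *v (mN t - m t) + \<gamma> *\<^sub>R (pN t - p t)) (at t within {0..T})"
        by (rule vd_eq[OF has_vector_derivative_diff[OF a[THEN conjunct1] b[THEN conjunct1]]]) (simp add: algebra_simps)
      show "((\<lambda>t. mN t - m t) has_vector_derivative (A + G) *v (mN t - m t) + \<gamma> *\<^sub>R (pN t - p t)) (at t within {0..T})"
        by (rule vd_eq[OF has_vector_derivative_diff[OF a[THEN conjunct2, THEN conjunct1] b[THEN conjunct1]]]) (simp add: algebra_simps Bu)
      show "((\<lambda>t. pN t - p t) has_vector_derivative - (transpose (A + G) *v (pN t - p t)) -
          (transpose (mat 1 - \<Gamma>) ** Q) *v (xN t - m t - \<Gamma> *v (mN t - m t))) (at t within {0..T})"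
        by (rule vd_eq[OF has_vector_derivative_diff[OF a[THEN conjunct2, THEN conjunct2, THEN conjunct1] b[THEN conjunct2, THEN conjunct1]]]) (simp add: algebra_simps)
      show "((\<lambda>t. yN t - y t) has_vector_derivative - (transpose A *v (yN t - y t)) + Q *v (xN t - m t - \<Gamma> *v (mN t - m t))) (at t within {0..T})"
        by (rule vd_eq[OF has_vector_derivative_diff[OF a[THEN conjunct2, THEN conjunct2, THEN conjunct2] b[THEN conjunct2, THEN conjunct2]]]) (simp add: algebra_simps)
    qed (use av MF in \<open>auto simp: AV_sol_def MF_sol_def algebra_simps\<close>)
    have x0: "xN 0 - m 0 = ?xb - m0" using av MF by (simp add: AV_sol_def MF_sol_def)
    show "\<forall>t\<in>{0..T}. norm (xN t - m t) + norm (mN t - m t) + norm (pN t - p t) + norm (yN t - y t)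
               \<le> C * norm (?xb - m0)"
      using C[OF s] x0 by simp
  qed
qed

end
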